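(* Let $F=f+\mu c$ with $\mu>0$, where $c:\mathbb{R}^n\to\mathbb{R}$ is convex and $f:\mathbb{R}^n\to\mathbb{R}$ is continuously differentiable with $L$-Lipschitz gradient and strongly convex with constant $L'>0$ (i.e. $(\nabla f(x)-\nabla f(y))^T(x-y)\ge L'\|x-y\|^2$). Let $\{x_k\}$ be generated by $x_{k+1}=x_k+\alpha_kd_k$, where $d_k=\mathscr{P}_c(x_k-\tau_k\nabla f(x_k),\mu\tau_k)-x_k\ne0$ with $0<\tau_{\min}\le\tau_k\le\tau_{\max}<\infty$, and where, for a fixed $\theta>0$ and every $k$, the step size $\alpha_k\in(0,1]$ satisfies $\nu(\alpha_k)|1-\lambda(\alpha_k)|\ge\theta$ and $F_{k+1}-R_k\ge-\frac{\alpha_k^2}{2}L\|d_k\|^2+\alpha_k\Delta_k$. Suppose $x_k\to x^*$, a minimizer of $F$. Then there exist constants $q\in(0,1)$ and $\xi_1,\xi_2,\xi_3>0$ such that for all $k$ $$F_k-F(x^* )\le\xi_1q^{2k},\qquad \|x_k-x^*\|\le\xi_2q^k,\qquad \|d_k\|\le\xi_3q^k .$$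
   Context: Notation: $h_k=h(x_k)$, $\nabla h_k=\nabla h(x_k)$; $\mathscr{P}_c(x,\vartheta)=\operatorname{argmin}_y\{\vartheta c(y)+\frac12\|x-y\|^2\}$ for $\vartheta>0$. $\Delta_k=d_k^T\nabla f_k+\mu(c(x_k+d_k)-c_k)$. Reference value: for an integer $N>0$, $m(0)=0$, $0\le m(k)\le\min\{m(k-1)+1,N-1\}$, $F_{l(k)}=\max_{0\le j\le m(k)}F_{k-j}$, and $R_k=\eta_kF_{l(k)}+(1-\eta_k)F_k$ with $\eta_k\in[0,1]$. Goldstein quotients: $\nu(\alpha_k)=\frac{F_{k+1}-F_k}{\alpha_k\Delta_k}$ and $\lambda(\alpha_k)=\frac{F_{k+1}-R_k}{\alpha_k\Delta_k}$. *)

theory Defs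
  imports "HOL-Analysis.Analysis"
begin

text \<open>Proximal operator: P_c(x, t) = argmin_y { t * c y + 1/2 * norm (x - y)^2 }.
  For convex finite-valued c and t > 0 the minimizer exists and is unique.\<close>
definition prox :: "('a::real_normed_vector \<Rightarrow> real) \<Rightarrow> 'a \<Rightarrow> real \<Rightarrow> 'a" where
  "prox c x t = (THE y. \<forall>z. t * c y + (1/2) * (norm (x - y))^2 \<le> t * c z + (1/2) * (norm (x - z))^2)"

definition Fmax_ref :: "(nat \<Rightarrow> real) \<Rightarrow> (nat \<Rightarrow> nat) \<Rightarrow> nat \<Rightarrow> real" where
  "Fmax_ref Fs m k = Max ((\<lambda>j. Fs (k - j)) ` {0..m k})"

end

theory Submission
  imports Defs
begin


lemma line_deriv:
  fixes f :: "'a::euclidean_space \<Rightarrow> real"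
  assumes fg: "\<And>y. (f has_derivative (\<lambda>h. gf y \<bullet> h)) (at y)"
  shows "((\<lambda>t. f (x + t *\<^sub>R h)) has_real_derivative (gf (x + t *\<^sub>R h) \<bullet> h)) (at t)"
proof -
  have "((\<lambda>t. x + t *\<^sub>R h) has_derivative (\<lambda>s. s *\<^sub>R h)) (at t)"
    by (auto intro!: derivative_eq_intros)
  from has_derivative_compose[OF this fg]
  have "((\<lambda>t. f (x + t *\<^sub>R h)) has_derivative (\<lambda>s. gf (x + t *\<^sub>R h) \<bullet> (s *\<^sub>R h))) (at t)" .
  moreover have "(\<lambda>s. gf (x + t *\<^sub>R h) \<bullet> (s *\<^sub>R h)) = (*) (gf (x + t *\<^sub>R h) \<bullet> h)"
    by (rule ext) (simp add: mult.commute)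
  ultimately show ?thesis unfolding has_field_derivative_def by simp
qed

lemma strong_grad_ineq:
  fixes f :: "'a::euclidean_space \<Rightarrow> real"
  assumes fg: "\<And>y. (f has_derivative (\<lambda>h. gf y \<bullet> h)) (at y)"
    and fs: "\<And>y z. (gf y - gf z) \<bullet> (y - z) \<ge> L' * (norm (y - z))^2"
  shows "f x + gf x \<bullet> h + L'/2 * (norm h)^2 \<le> f (x + h)"
proof -
  define \<phi> where "\<phi> t = f (x + t *\<^sub>R h) - t * (gf x \<bullet> h) - L' * t^2 / 2 * (norm h)^2" for t
  have "\<phi> 0 \<le> \<phi> 1"
  proof (rule DERIV_nonneg_imp_nondecreasing[of 0 1 \<phi>])
    fix t :: real assume t: "0 \<le> t" "t \<le> 1"
    have d: "(\<phi> has_real_derivative (gf (x + t *\<^sub>R h) \<bullet> h - gf x \<bullet> h - L' * t * (norm h)^2)) (at t)"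
      unfolding \<phi>_def
      by (auto intro!: derivative_eq_intros line_deriv[OF fg] simp: power2_eq_square)
    have "gf (x + t *\<^sub>R h) \<bullet> h - gf x \<bullet> h - L' * t * (norm h)^2 \<ge> 0"
    proof (cases "t = 0")
      case True then show ?thesis by simp
    next
      case False
      with t have tp: "t > 0" by simp
      have "L' * (norm (t *\<^sub>R h))^2 \<le> (gf (x + t *\<^sub>R h) - gf x) \<bullet> (t *\<^sub>R h)"
        using fs[of "x + t *\<^sub>R h" x] by simp
      hence "t * (L' * t * (norm h)^2) \<le> t * ((gf (x + t *\<^sub>R h) - gf x) \<bullet> h)"
        using t by (simp add: power2_eq_square algebra_simps)
      hence "L' * t * (norm h)^2 \<le> (gf (x + t *\<^sub>R h) - gf x) \<bullet> h"
        using tp by simp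
      then show ?thesis by (simp add: inner_diff_left)
    qed
    with d show "\<exists>y. (\<phi> has_real_derivative y) (at t) \<and> 0 \<le> y" by blast
  qed simp
  then show ?thesis unfolding \<phi>_def by simp
qed

lemma descent_ineq:
  fixes f :: "'a::euclidean_space \<Rightarrow> real"
  assumes fg: "\<And>y. (f has_derivative (\<lambda>h. gf y \<bullet> h)) (at y)"
    and gl: "\<And>y z. norm (gf y - gf z) \<le> L * norm (y - z)"
  shows "f (x + h) \<le> f x + gf x \<bullet> h + L/2 * (norm h)^2"
proof -
  define \<phi> where "\<phi> t = f (x + t *\<^sub>R h) - t * (gf x \<bullet> h) - L * t^2 / 2 * (norm h)^2" for t
  have "\<phi> 1 \<le> \<phi> 0"
  proof (rule DERIV_nonpos_imp_nonincreasing[of 0 1 \<phi>])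
    fix t :: real assume t: "0 \<le> t" "t \<le> 1"
    have d: "(\<phi> has_real_derivative (gf (x + t *\<^sub>R h) \<bullet> h - gf x \<bullet> h - L * t * (norm h)^2)) (at t)"
      unfolding \<phi>_def
      by (auto intro!: derivative_eq_intros line_deriv[OF fg] simp: power2_eq_square)
    have "(gf (x + t *\<^sub>R h) - gf x) \<bullet> h \<le> norm (gf (x + t *\<^sub>R h) - gf x) * norm h"
      by (rule norm_cauchy_schwarz)
    also have "\<dots> \<le> (L * norm (t *\<^sub>R h)) * norm h"
      using gl[of "x + t *\<^sub>R h" x] by (simp add: mult_right_mono)
    also have "\<dots> = L * t * (norm h)^2" using t by (simp add: power2_eq_square)
    finally have "gf (x + t *\<^sub>R h) \<bullet> h - gf x \<bullet> h - L * t * (norm h)^2 \<le> 0"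
      by (simp add: inner_diff_left)
    with d show "\<exists>y. (\<phi> has_real_derivative y) (at t) \<and> y \<le> 0" by blast
  qed simp
  then show ?thesis unfolding \<phi>_def by simp
qed



lemma para_mid:
  fixes a b :: "'a::real_inner"
  shows "(norm ((1/2) *\<^sub>R (a + b)))^2 = (norm a)^2/2 + (norm b)^2/2 - (norm (a - b))^2/4"
proof -
  have 1: "(norm ((1/2) *\<^sub>R (a + b)))^2 = ((a \<bullet> a) + (b \<bullet> b) + 2 * (a \<bullet> b))/4"
    by (simp add: power2_norm_eq_inner inner_add_left inner_add_right inner_commute[of b a] algebra_simps)
  have 2: "(norm (a - b))^2 = (a \<bullet> a) + (b \<bullet> b) - 2 * (a \<bullet> b)"
    by (simp add: power2_norm_eq_inner inner_diff_left inner_diff_right inner_commute[of b a] algebra_simps)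
  show ?thesis unfolding 1 2 power2_norm_eq_inner[of a] power2_norm_eq_inner[of b] by (simp add: field_simps)
qed

lemma prox_exists:
  fixes c :: "'a::euclidean_space \<Rightarrow> real"
  assumes cc: "convex_on UNIV c" and t: "t > 0"
  shows "\<exists>y. \<forall>w. t * c y + 1/2*(norm (z - y))^2 \<le> t * c w + 1/2*(norm (z - w))^2"
proof -
  define g where "g w = t * c w + 1/2*(norm (z - w))^2" for w
  have contc: "continuous_on UNIV c" using convex_on_continuous[OF open_UNIV cc] .
  have contg: "continuous_on A g" for A
    unfolding g_def by (intro continuous_intros continuous_on_subset[OF contc]) auto
  obtain b :: 'a where b: "b \<in> Basis" using nonempty_Basis by blast
  have "z + b \<in> sphere z 1" using b by (simp add: dist_norm)
  then have ne: "sphere z 1 \<noteq> {}" by blast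
  obtain u0 where u0: "u0 \<in> sphere z 1" "\<forall>u\<in>sphere z 1. c u0 \<le> c u"
    using continuous_attains_inf[OF compact_sphere ne continuous_on_subset[OF contc]] by blast
  define m where "m = c u0"
  define K where "K = c z - m"
  define r where "r = 2 * t * \<bar>K\<bar> + 1"
  have far: "g z < g w" if w: "norm (z - w) > r" for w
  proof -
    define s where "s = norm (z - w)"
    have s1: "s > 1" using w unfolding s_def r_def using t by (smt (verit) mult_nonneg_nonneg abs_ge_zero)
    define u where "u = (1 - 1/s) *\<^sub>R z + (1/s) *\<^sub>R w"
    have uz: "u - z = (1/s) *\<^sub>R (w - z)" unfolding u_def by (simp add: algebra_simps)
    have wz: "w \<noteq> z" using s1 unfolding s_def by auto
    hence "norm (u - z) = 1" using s1 wz uz unfolding s_def by (simp add: norm_minus_commute)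
    hence "u \<in> sphere z 1" by (simp add: dist_norm norm_minus_commute)
    hence "m \<le> c u" using u0 unfolding m_def by blast
    also have "c u \<le> (1 - 1/s) * c z + (1/s) * c w"
      unfolding u_def using s1 by (intro convex_onD[OF cc]) auto
    finally have "s * m \<le> s * ((1 - 1/s) * c z + (1/s) * c w)" using s1 by simp
    hence cw: "s * m \<le> (s - 1) * c z + c w" using s1 by (simp add: algebra_simps)
    have "s > 2 * t * \<bar>K\<bar>" using w unfolding s_def r_def by simp
    hence "s * s > s * (2 * t * \<bar>K\<bar>)" using s1 by (intro mult_strict_left_mono) auto
    moreover have "t * (s * K) \<le> t * (s * \<bar>K\<bar>)" using t s1 by (intro mult_left_mono) auto
    ultimately have "t * s * K < s^2 / 2" by (simp add: power2_eq_square algebra_simps)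
    moreover have "t * c w \<ge> t * (c z - s * K)" using cw t unfolding K_def
      by (intro mult_left_mono) (auto simp: algebra_simps)
    ultimately show ?thesis unfolding g_def s_def[symmetric] by (simp add: algebra_simps)
  qed
  have r0: "r \<ge> 0" unfolding r_def using t by (smt (verit) abs_ge_zero mult_nonneg_nonneg)
  have cne: "cball z r \<noteq> {}" using r0 by simp
  obtain y0 where y0: "y0 \<in> cball z r" "\<forall>w\<in>cball z r. g y0 \<le> g w"
    using continuous_attains_inf[OF compact_cball cne contg] by blast
  have "g y0 \<le> g w" for w
  proof (cases "norm (z - w) \<le> r")
    case True then show ?thesis using y0 by (simp add: dist_norm)
  next
    case False
    then have "g z < g w" using far by simp
    moreover have "g y0 \<le> g z" using y0 r0 by simp
    ultimately show ?thesis by simp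
  qed
  then show ?thesis unfolding g_def by blast
qed

lemma prox_unique:
  fixes c :: "'a::euclidean_space \<Rightarrow> real"
  assumes cc: "convex_on UNIV c" and t: "t > 0"
    and y1: "\<forall>w. t * c y1 + 1/2*(norm (z - y1))^2 \<le> t * c w + 1/2*(norm (z - w))^2"
    and y2: "\<forall>w. t * c y2 + 1/2*(norm (z - y2))^2 \<le> t * c w + 1/2*(norm (z - w))^2"
  shows "y1 = y2"
proof (rule ccontr)
  assume ne: "y1 \<noteq> y2"
  define mp where "mp = (1 - 1/2) *\<^sub>R y1 + (1/2::real) *\<^sub>R y2"
  have cm: "c mp \<le> (1 - 1/2) * c y1 + (1/2) * c y2"
    unfolding mp_def by (intro convex_onD[OF cc]) auto
  have zz: "z = (1/2::real) *\<^sub>R z + (1/2::real) *\<^sub>R z" by (simp flip: scaleR_add_left)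
  have "z - mp = (1/2) *\<^sub>R ((z - y1) + (z - y2))" unfolding mp_def by (subst zz) (simp add: algebra_simps)
  hence nm: "(norm (z - mp))^2 = (norm (z - y1))^2/2 + (norm (z - y2))^2/2 - (norm (y2 - y1))^2/4"
    using para_mid[of "z - y1" "z - y2"] by simp
  have pos: "(norm (y2 - y1))^2 > 0" using ne by simp
  have e1: "t * c y1 + 1/2*(norm (z - y1))^2 \<le> t * c y2 + 1/2*(norm (z - y2))^2" using y1 by blast
  have e2: "t * c y2 + 1/2*(norm (z - y2))^2 \<le> t * c y1 + 1/2*(norm (z - y1))^2" using y2 by blast
  have "t * c y1 + 1/2*(norm (z - y1))^2 \<le> t * c mp + 1/2*(norm (z - mp))^2" using y1 by blast
  also have "t * c mp \<le> t * ((1 - 1/2) * c y1 + (1/2) * c y2)" using cm t by (intro mult_left_mono) auto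
  then have "t * c mp + 1/2*(norm (z - mp))^2 \<le> t * ((1 - 1/2) * c y1 + (1/2) * c y2) + 1/2*(norm (z - mp))^2" by simp
  finally show False using nm pos e1 e2 by (simp add: algebra_simps)
qed

lemma prox_min:
  fixes c :: "'a::euclidean_space \<Rightarrow> real"
  assumes cc: "convex_on UNIV c" and t: "t > 0"
  shows "t * c (prox c z t) + 1/2*(norm (z - prox c z t))^2 \<le> t * c w + 1/2*(norm (z - w))^2"
proof -
  have "\<exists>!y. \<forall>w. t * c y + 1/2*(norm (z - y))^2 \<le> t * c w + 1/2*(norm (z - w))^2"
    using prox_exists[OF cc t] prox_unique[OF cc t] by blast
  from theI'[OF this] show ?thesis unfolding prox_def by simp
qed



lemma subgrad_from_min:
  fixes c :: "'a::euclidean_space \<Rightarrow> real"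
  assumes cc: "convex_on UNIV c" and t0: "t \<ge> 0"
    and ymin: "\<And>w. t * c y + 1/2*(norm (z - y))^2 \<le> t * c w + 1/2*(norm (z - w))^2"
  shows "(z - y) \<bullet> (w - y) \<le> t * (c w - c y)"
proof (rule ccontr)
  define e where "e = z - y"
  define v where "v = w - y"
  define \<delta> where "\<delta> = e \<bullet> v - t * (c w - c y)"
  assume "\<not> ?thesis"
  hence dpos: "\<delta> > 0" unfolding \<delta>_def e_def v_def by simp
  have key: "\<delta> \<le> s/2 * (norm v)^2" if s: "0 < s" "s \<le> 1" for s
  proof -
    have cs: "c ((1 - s) *\<^sub>R y + s *\<^sub>R w) \<le> (1 - s) * c y + s * c w"
      using s by (intro convex_onD[OF cc]) auto
    have zw: "z - ((1 - s) *\<^sub>R y + s *\<^sub>R w) = e - s *\<^sub>R v"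
      unfolding e_def v_def by (simp add: algebra_simps)
    have nz: "(norm (e - s *\<^sub>R v))^2 = (norm e)^2 - 2 * s * (e \<bullet> v) + s^2 * (norm v)^2"
      unfolding power2_norm_eq_inner by (simp add: inner_diff_left inner_diff_right inner_commute[of v e] algebra_simps power2_eq_square)
    have m: "t * c y + 1/2*(norm e)^2 \<le> t * c ((1 - s) *\<^sub>R y + s *\<^sub>R w) + 1/2*(norm (e - s *\<^sub>R v))^2"
      using ymin[of "(1 - s) *\<^sub>R y + s *\<^sub>R w"] unfolding zw e_def by simp
    have m2: "t * c ((1 - s) *\<^sub>R y + s *\<^sub>R w) \<le> t * ((1 - s) * c y + s * c w)"
      using cs t0 by (auto intro: mult_left_mono)
    have "0 \<le> s * (t * (c w - c y) - e \<bullet> v + s/2 * (norm v)^2)"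
      using m m2 unfolding nz by (simp add: algebra_simps power2_eq_square)
    hence "0 \<le> t * (c w - c y) - e \<bullet> v + s/2 * (norm v)^2"
      using s by (simp add: zero_le_mult_iff)
    thus ?thesis unfolding \<delta>_def by simp
  qed
  define s where "s = min 1 (\<delta> / ((norm v)^2 + 1))"
  have np: "(norm v)^2 + 1 > 0" by (simp add: add_nonneg_pos)
  hence s0: "0 < s" "s \<le> 1" unfolding s_def using dpos by auto
  have "s * (norm v)^2 \<le> \<delta> / ((norm v)^2 + 1) * (norm v)^2"
    unfolding s_def by (intro mult_right_mono) auto
  also have "\<dots> < \<delta>"
  proof -
    have "\<delta> * (norm v)^2 < \<delta> * ((norm v)^2 + 1)" using dpos by simp
    thus ?thesis using np by (simp add: divide_simps)
  qed
  finally have "s/2 * (norm v)^2 < \<delta>" using dpos by simp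
  with key[OF s0] show False by simp
qed

lemma step_real:
  fixes D a \<theta> P u nu lam :: real
  assumes "a > 0" "a \<le> 1" "\<theta> > 0" "P \<ge> 0" "u \<ge> 0" "u \<le> a * P"
    and nu1: "nu \<ge> 1 - u" and lam1: "lam \<le> 1 + u" and ln: "lam \<ge> nu"
    and g: "nu * \<bar>1 - lam\<bar> \<ge> \<theta>"
  shows "nu * a \<ge> \<theta>^2/(1+P)^3"
proof -
  have nupos: "nu > 0"
  proof (rule ccontr)
    assume "\<not> nu > 0"
    hence "nu * \<bar>1 - lam\<bar> \<le> 0" by (simp add: mult_nonpos_nonneg)
    with g assms show False by simp
  qed
  have ab: "\<bar>1 - lam\<bar> \<le> u" using nu1 lam1 ln by (auto simp: abs_if)
  have nub: "nu \<le> 1 + P" using ln lam1 assms by (smt (verit) mult_left_le_one_le)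
  have uP: "u \<le> 1 + P" using assms by (smt (verit) mult_left_le_one_le)
  have "\<theta> \<le> nu * u" using g ab nupos by (smt (verit) mult_left_mono)
  also have "\<dots> \<le> (1 + P) * (a * P)" using nub nupos assms by (intro mult_mono) auto
  also have "\<dots> \<le> (1 + P) * (a * (1 + P))" using assms by (intro mult_left_mono) auto
  finally have ta: "\<theta> \<le> a * (1+P)^2" by (simp add: power2_eq_square algebra_simps)
  have "\<theta> \<le> nu * (1 + P)" using g ab uP nupos by (smt (verit) mult_left_mono)
  hence "\<theta> * \<theta> \<le> (nu * (1 + P)) * (a * (1+P)^2)" using ta assms by (intro mult_mono) auto
  hence "\<theta>^2 \<le> (nu * a) * (1+P)^3" by (simp add: power2_eq_square power3_eq_cube algebra_simps)
  moreover have "(1+P)^3 > 0" using assms by simp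
  ultimately show ?thesis by (simp add: divide_simps)
qed

theorem theorem3:
  fixes f c :: "'a::euclidean_space \<Rightarrow> real"
    and gf :: "'a \<Rightarrow> 'a"
    and \<mu> L L' \<theta> \<tau>min \<tau>max :: real
    and N :: nat and m :: "nat \<Rightarrow> nat"
    and x d :: "nat \<Rightarrow> 'a" and \<alpha> \<tau> \<eta> :: "nat \<Rightarrow> real"
    and xs :: 'a
  assumes mu_pos: "\<mu> > 0"
    and c_convex: "convex_on UNIV c"
    and f_grad: "\<And>y. (f has_derivative (\<lambda>h. gf y \<bullet> h)) (at y)"
    and gf_cont: "continuous_on UNIV gf"
    and gf_lip: "\<And>y z. norm (gf y - gf z) \<le> L * norm (y - z)"
    and L'_pos: "L' > 0"
    and f_strong: "\<And>y z. (gf y - gf z) \<bullet> (y - z) \<ge> L' * (norm (y - z))^2"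
    and theta_pos: "\<theta> > 0"
    and tau_min_pos: "0 < \<tau>min"
    and tau_bounds: "\<And>k. \<tau>min \<le> \<tau> k \<and> \<tau> k \<le> \<tau>max"
    and d_def: "\<And>k. d k = prox c (x k - \<tau> k *\<^sub>R gf (x k)) (\<mu> * \<tau> k) - x k"
    and d_nz: "\<And>k. d k \<noteq> 0"
    and x_step: "\<And>k. x (Suc k) = x k + \<alpha> k *\<^sub>R d k"
    and alpha_range: "\<And>k. 0 < \<alpha> k \<and> \<alpha> k \<le> 1"
    and N_pos: "N > 0"
    and m0: "m 0 = 0"
    and m_bound: "\<And>k. m (Suc k) \<le> min (m k + 1) (N - 1)"
    and eta_range: "\<And>k. 0 \<le> \<eta> k \<and> \<eta> k \<le> 1"
    and goldstein: "\<And>k.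
      let F = (\<lambda>y. f y + \<mu> * c y);
          Fs = (\<lambda>j. F (x j));
          R = \<eta> k * Fmax_ref Fs m k + (1 - \<eta> k) * Fs k;
          Dk = d k \<bullet> gf (x k) + \<mu> * (c (x k + d k) - c (x k));
          nu = (Fs (Suc k) - Fs k) / (\<alpha> k * Dk);
          lam = (Fs (Suc k) - R) / (\<alpha> k * Dk)
      in nu * \<bar>1 - lam\<bar> \<ge> \<theta>
         \<and> Fs (Suc k) - R \<ge> - ((\<alpha> k)^2 / 2) * L * (norm (d k))^2 + \<alpha> k * Dk"
    and x_lim: "x \<longlonglongrightarrow> xs"
    and xs_min: "\<And>y. f xs + \<mu> * c xs \<le> f y + \<mu> * c y"
  shows "\<exists>q \<xi>1 \<xi>2 \<xi>3. 0 < q \<and> q < 1 \<and> \<xi>1 > 0 \<and> \<xi>2 > 0 \<and> \<xi>3 > 0 \<and>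
           (\<forall>k. (f (x k) + \<mu> * c (x k)) - (f xs + \<mu> * c xs) \<le> \<xi>1 * q ^ (2 * k)
              \<and> norm (x k - xs) \<le> \<xi>2 * q ^ k
              \<and> norm (d k) \<le> \<xi>3 * q ^ k)"
proof -
  define F where "F = (\<lambda>y. f y + \<mu> * c y)"
  define E where "E k = F (x k) - F xs" for k
  define D where "D k = - (d k \<bullet> gf (x k) + \<mu> * (c (x k + d k) - c (x k)))" for k
  define P where "P = L * \<tau>max / 2"
  define C where "C = 2 + 4 / (\<tau>min * L')"
  define \<kappa> where "\<kappa> = \<theta>^2 / (1 + P)^3"
  obtain b :: 'a where b: "b \<in> Basis" using nonempty_Basis by blast
  have L0: "L \<ge> 0"
  proof -
    have "0 \<le> L * norm (b - 0)" using gf_lip[of b 0] norm_ge_zero order_trans by blast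
    then show ?thesis using b by simp
  qed
  have tmax: "\<tau>max > 0" using tau_bounds[of 0] tau_min_pos by linarith
  have P0: "P \<ge> 0" unfolding P_def using L0 tmax by simp
  have Cpos: "C > 0" unfolding C_def using tau_min_pos L'_pos by (simp add: add_pos_nonneg)
  have kpos: "\<kappa> > 0" unfolding \<kappa>_def using theta_pos P0 by simp
  have Fmin: "F xs \<le> F y" for y using xs_min unfolding F_def by simp
  have E0: "E k \<ge> 0" for k unfolding E_def using Fmin by simp
  have Ex: "L'/4 * (norm (y - xs))^2 \<le> F y - F xs" for y
  proof -
    define mp where "mp = (1 - 1/2) *\<^sub>R y + (1/2::real) *\<^sub>R xs"
    define h where "h = (1/2::real) *\<^sub>R (y - xs)"
    have yy: "y = (1/2::real) *\<^sub>R y + (1/2::real) *\<^sub>R y" by (simp flip: scaleR_add_left)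
    have h1: "y = mp + h" unfolding h_def mp_def by (subst yy) (simp add: algebra_simps)
    have h2: "xs = mp + (-h)" unfolding h_def mp_def
    proof -
      have "xs = (1/2::real) *\<^sub>R xs + (1/2::real) *\<^sub>R xs" by (simp flip: scaleR_add_left)
      then show "xs = (1 - 1/2) *\<^sub>R y + (1/2::real) *\<^sub>R xs + - ((1/2::real) *\<^sub>R (y - xs))"
        by (simp add: algebra_simps)
    qed
    have s1: "f mp + gf mp \<bullet> h + L'/2*(norm h)^2 \<le> f y"
      using strong_grad_ineq[OF f_grad f_strong, of mp h] h1 by simp
    have s2: "f mp + gf mp \<bullet> (-h) + L'/2*(norm (-h))^2 \<le> f xs"
      using strong_grad_ineq[OF f_grad f_strong, of mp "-h"] h2 by simp
    have cm: "c mp \<le> (1 - 1/2) * c y + (1/2) * c xs"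
      unfolding mp_def by (intro convex_onD[OF c_convex]) auto
    have cm2: "\<mu> * c mp \<le> \<mu> * ((1 - 1/2) * c y + (1/2) * c xs)"
      using cm mu_pos by (intro mult_left_mono) auto
    have fm: "F xs \<le> F mp" by (rule Fmin)
    have nh: "(norm h)^2 = (norm (y - xs))^2/4" unfolding h_def by (simp add: power2_eq_square)
    have cm3: "\<mu> * c mp \<le> \<mu> * c y / 2 + \<mu> * c xs / 2" using cm2 by (simp add: algebra_simps)
    have fm2: "f xs + \<mu> * c xs \<le> f mp + \<mu> * c mp" using fm unfolding F_def by simp
    have nh2: "(norm (-h))^2 = (norm (y - xs))^2/4" using nh by simp
    show ?thesis unfolding F_def using s1 s2 cm3 fm2 nh nh2 by simp
  qed
  have main: "(norm (d k))^2 \<le> \<tau> k * D k \<and> E k \<le> C * D k \<and> E (Suc k) \<le> E k - \<kappa> * D k" for k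
  proof -
    define t where "t = \<tau> k"
    have t: "\<tau>min \<le> t" "t \<le> \<tau>max" using tau_bounds unfolding t_def by auto
    have tp: "t > 0" using t tau_min_pos by linarith
    define g where "g = gf (x k)"
    define z where "z = x k - t *\<^sub>R g"
    define y where "y = x k + d k"
    have yp: "y = prox c z (\<mu> * t)" unfolding y_def z_def t_def g_def using d_def[of k] by simp
    have mt: "\<mu> * t > 0" using mu_pos tp by simp
    have ymin: "\<And>w. (\<mu>*t) * c y + 1/2*(norm (z - y))^2 \<le> (\<mu>*t) * c w + 1/2*(norm (z - w))^2"
      unfolding yp by (rule prox_min[OF c_convex mt])
    have sg: "\<And>w. (z - y) \<bullet> (w - y) \<le> (\<mu>*t) * (c w - c y)"
      by (rule subgrad_from_min[OF c_convex _ ymin]) (use mt in simp)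
    have zy: "z - y = - (t *\<^sub>R g) - d k" unfolding z_def y_def by simp
    have Dk: "D k = - (g \<bullet> d k) - \<mu> * (c y - c (x k))"
      unfolding D_def g_def y_def by (simp add: inner_commute)
    have in1: "(z - y) \<bullet> (x k - y) = t * (g \<bullet> d k) + (norm (d k))^2"
      unfolding zy by (simp add: y_def inner_diff_left power2_norm_eq_inner algebra_simps)
    have F1: "(norm (d k))^2 \<le> t * D k"
      using sg[of "x k"] unfolding in1 Dk by (simp add: algebra_simps)
    have dpos: "(norm (d k))^2 > 0" using d_nz[of k] by simp
    have "t * D k > 0" using F1 dpos by linarith
    hence Dpos: "D k > 0" using tp by (simp add: zero_less_mult_iff)
    have sgx: "(z - y) \<bullet> (xs - y) \<le> (\<mu>*t) * (c xs - c y)" by (rule sg)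
    have in2: "(z - y) \<bullet> (xs - y) = - t * (g \<bullet> (xs - x k)) + t * (g \<bullet> d k) - d k \<bullet> (xs - x k) + (norm (d k))^2"
      unfolding zy by (simp add: y_def inner_diff_left inner_diff_right power2_norm_eq_inner algebra_simps)
    have sgi: "f (x k) + g \<bullet> (xs - x k) + L'/2 * (norm (xs - x k))^2 \<le> f xs"
      using strong_grad_ineq[OF f_grad f_strong, of "x k" "xs - x k"] unfolding g_def by simp
    have "L'/2 * (norm (xs - x k))^2 \<ge> 0" using L'_pos by simp
    hence sgi2: "f (x k) + g \<bullet> (xs - x k) \<le> f xs" using sgi by linarith
    have tsg: "t * (f (x k) + g \<bullet> (xs - x k)) \<le> t * f xs" using sgi2 tp by simp
    have tE: "t * E k \<le> t * D k + d k \<bullet> (xs - x k) - (norm (d k))^2"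
      using sgx tsg unfolding in2 E_def F_def Dk by (simp add: algebra_simps)
    define a where "a = norm (x k - xs)"
    define bb where "bb = norm (d k)"
    have cs: "d k \<bullet> (xs - x k) \<le> bb * a"
      unfolding a_def bb_def using norm_cauchy_schwarz[of "d k" "xs - x k"] by (simp add: norm_minus_commute)
    define s where "s = t * L' / 4"
    have sp: "s > 0" unfolding s_def using tp L'_pos by simp
    have "0 \<le> (s * a - bb)^2" by simp
    hence am: "2 * s * (a * bb) \<le> s^2 * a^2 + bb^2" by (simp add: power2_eq_square algebra_simps)
    have a2: "a^2 \<le> 4 / L' * E k" using Ex[of "x k"] L'_pos unfolding a_def E_def by (simp add: field_simps)
    have b2: "bb^2 \<le> t * D k" using F1 unfolding bb_def .
    have "s^2 * a^2 \<le> s^2 * (4 / L' * E k)" using a2 by (rule mult_left_mono) simp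
    hence ab2: "2 * s * (a * bb) \<le> s^2 * (4 / L' * E k) + t * D k" using am b2 by linarith
    have nn: "(norm (d k))^2 \<ge> 0" by simp
    have cs': "d k \<bullet> (xs - x k) \<le> a * bb" using cs by (simp add: mult.commute)
    have "t * E k \<le> t * D k + a * bb" using tE cs' nn by linarith
    hence "2 * s * (t * E k) \<le> 2 * s * (t * D k + a * bb)" using sp by (intro mult_left_mono) auto
    hence "2 * s * (t * E k) \<le> 2 * s * (t * D k) + s^2 * (4 / L' * E k) + t * D k"
      using ab2 by (simp add: algebra_simps)
    hence "2 * s * t * E k \<le> 2 * s * t * D k + s * t * E k + t * D k"
      unfolding s_def using L'_pos by (simp add: power2_eq_square field_simps)
    hence "s * t * E k \<le> 2 * s * t * D k + t * D k" by simp
    hence "t * (s * E k) \<le> t * (2 * s * D k + D k)" by (simp add: algebra_simps)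
    hence "s * E k \<le> 2 * s * D k + D k" using tp by simp
    hence "E k \<le> 2 * D k + D k / s" using sp by (simp add: field_simps)
    also have "D k / s = 4 / (t * L') * D k" unfolding s_def by simp
    also have "4 / (t * L') * D k \<le> 4 / (\<tau>min * L') * D k"
      using Dpos t tau_min_pos L'_pos by (intro mult_right_mono divide_left_mono mult_right_mono) auto
    finally have F2: "E k \<le> C * D k" unfolding C_def by (simp add: algebra_simps)
    define al where "al = \<alpha> k"
    have al: "0 < al" "al \<le> 1" using alpha_range unfolding al_def by auto
    have xs1: "x (Suc k) = x k + al *\<^sub>R d k" using x_step unfolding al_def by simp
    have desc: "f (x (Suc k)) \<le> f (x k) + g \<bullet> (al *\<^sub>R d k) + L/2 * (norm (al *\<^sub>R d k))^2"
      unfolding xs1 g_def by (rule descent_ineq[OF f_grad gf_lip])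
    have cconv: "c (x (Suc k)) \<le> (1 - al) * c (x k) + al * c y"
    proof -
      have "x (Suc k) = (1 - al) *\<^sub>R x k + al *\<^sub>R y" unfolding xs1 y_def by (simp add: algebra_simps)
      then show ?thesis using al by (simp add: convex_onD[OF c_convex])
    qed
    define A where "A = F (x (Suc k)) - F (x k)"
    have Ab: "A \<le> - al * D k + L * al^2 / 2 * (norm (d k))^2"
    proof -
      have "\<mu> * c (x (Suc k)) \<le> \<mu> * ((1 - al) * c (x k) + al * c y)"
        using cconv mu_pos by (intro mult_left_mono) auto
      then show ?thesis using desc unfolding A_def F_def Dk
        by (simp add: algebra_simps power2_eq_square)
    qed
    define Dl where "Dl = d k \<bullet> gf (x k) + \<mu> * (c (x k + d k) - c (x k))"
    have DlD: "Dl = - D k" unfolding Dl_def D_def by simp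
    define R where "R = \<eta> k * Fmax_ref (\<lambda>j. F (x j)) m k + (1 - \<eta> k) * F (x k)"
    define B where "B = F (x (Suc k)) - R"
    have gk: "(A / (al * Dl)) * \<bar>1 - B / (al * Dl)\<bar> \<ge> \<theta> \<and> B \<ge> - (al^2 / 2) * L * (norm (d k))^2 + al * Dl"
      using goldstein[of k] unfolding A_def B_def R_def Dl_def al_def by (simp add: Let_def F_def)
    have fmx: "F (x k) \<le> Fmax_ref (\<lambda>j. F (x j)) m k"
      unfolding Fmax_ref_def by (rule Max_ge) (auto intro: image_eqI[where x=0])
    have RF: "R \<ge> F (x k)"
    proof -
      have "\<eta> k * F (x k) \<le> \<eta> k * Fmax_ref (\<lambda>j. F (x j)) m k"
        using fmx eta_range[of k] by (intro mult_left_mono) auto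
      then show ?thesis unfolding R_def by (simp add: algebra_simps)
    qed
    have BA: "B \<le> A" unfolding A_def B_def using RF by simp
    define nu where "nu = A / (al * Dl)"
    define lam where "lam = B / (al * Dl)"
    define u where "u = L * al * (norm (d k))^2 / (2 * D k)"
    have aD: "al * D k > 0" using al Dpos by simp
    have u0: "u \<ge> 0" unfolding u_def using L0 al Dpos by simp
    have uaD: "u * (al * D k) = L * al^2 / 2 * (norm (d k))^2"
      unfolding u_def using Dpos by (simp add: field_simps power2_eq_square)
    have nu1: "nu \<ge> 1 - u"
    proof -
      have "A \<le> - (al * D k) * (1 - u)" using Ab uaD by (simp add: algebra_simps)
      then show ?thesis unfolding nu_def DlD using aD by (simp add: divide_simps algebra_simps)
    qed
    have lam1: "lam \<le> 1 + u"
    proof -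
      have "B \<ge> - (al * D k) * (1 + u)" using gk uaD unfolding DlD by (simp add: algebra_simps)
      then show ?thesis unfolding lam_def DlD using aD by (simp add: divide_simps algebra_simps)
    qed
    have ln: "lam \<ge> nu" unfolding lam_def nu_def
    proof (rule divide_right_mono_neg[OF BA])
      show "al * Dl \<le> 0" unfolding DlD using aD by simp
    qed
    have uP: "u \<le> al * P"
    proof -
      have "t * D k \<le> \<tau>max * D k" using t Dpos by (intro mult_right_mono) auto
      hence "(norm (d k))^2 \<le> \<tau>max * D k" using F1 by linarith
      hence "L * (norm (d k))^2 \<le> L * (\<tau>max * D k)" using L0 by (rule mult_left_mono)
      hence "al * (L * (norm (d k))^2) \<le> al * (L * (\<tau>max * D k))" using al by simp
      hence "L * al * (norm (d k))^2 \<le> al * P * (2 * D k)" unfolding P_def by (simp add: algebra_simps)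
      then show ?thesis unfolding u_def using Dpos by (simp add: divide_simps algebra_simps)
    qed
    have nk: "nu * al \<ge> \<kappa>" unfolding \<kappa>_def
      by (rule step_real[OF al theta_pos P0 u0 uP nu1 lam1 ln]) (use gk in \<open>simp add: nu_def lam_def\<close>)
    have "A = - (nu * al) * D k" unfolding nu_def DlD using al Dpos by (simp add: field_simps)
    also have "\<dots> \<le> - \<kappa> * D k" using nk Dpos by (simp add: mult_right_mono)
    finally have F3: "E (Suc k) \<le> E k - \<kappa> * D k" unfolding A_def E_def by simp
    show ?thesis using F1 F2 F3 unfolding t_def by simp
  qed
  define \<rho> where "\<rho> = \<kappa> / C"
  define r where "r = max (1 - \<rho>) (1/2)"
  have rho0: "\<rho> > 0" unfolding \<rho>_def using kpos Cpos by simp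
  have r: "r > 0" "r < 1" unfolding r_def using rho0 by auto
  have Erec: "E (Suc k) \<le> r * E k" for k
  proof -
    have "\<kappa> * E k \<le> \<kappa> * (C * D k)" using main[of k] kpos by (intro mult_left_mono) auto
    hence "\<rho> * E k \<le> \<kappa> * D k" unfolding \<rho>_def using Cpos by (simp add: field_simps)
    hence "E (Suc k) \<le> (1 - \<rho>) * E k" using main[of k] by (simp add: algebra_simps)
    also have "\<dots> \<le> r * E k" unfolding r_def using E0[of k] by (intro mult_right_mono) auto
    finally show ?thesis .
  qed
  have Egeo: "E k \<le> E 0 * r^k" for k
  proof (induction k)
    case 0 then show ?case by simp
  next
    case (Suc k)
    have "E (Suc k) \<le> r * E k" by (rule Erec)
    also have "\<dots> \<le> r * (E 0 * r^k)" using Suc r by (intro mult_left_mono) auto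
    finally show ?case by (simp add: algebra_simps)
  qed
  define q where "q = sqrt r"
  have q: "0 < q" "q < 1" unfolding q_def using r by auto
  have qr: "q ^ (2*k) = r ^ k" for k unfolding q_def using r
    by (simp add: power_mult)
  have sqk: "sqrt (r^k) = q^k" for k unfolding q_def by (simp add: real_sqrt_power)
  define \<xi>1 where "\<xi>1 = E 0 + 1"
  define \<xi>2 where "\<xi>2 = sqrt (4 * \<xi>1 / L')"
  define \<xi>3 where "\<xi>3 = sqrt (\<tau>max * \<xi>1 / \<kappa>)"
  have x1: "\<xi>1 > 0" unfolding \<xi>1_def using E0[of 0] by simp
  have Ek: "E k \<le> \<xi>1 * r^k" for k
  proof -
    have "E 0 * r^k \<le> (E 0 + 1) * r^k" by (rule mult_right_mono) (use r in auto)
    then show ?thesis using Egeo[of k] unfolding \<xi>1_def by linarith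
  qed
  have p1: "F (x k) - F xs \<le> \<xi>1 * q^(2*k)" for k using Ek[of k] unfolding qr E_def .
  have p2: "norm (x k - xs) \<le> \<xi>2 * q^k" for k
  proof -
    have "(norm (x k - xs))^2 \<le> 4 * \<xi>1 / L' * r^k"
      using Ex[of "x k"] Ek[of k] L'_pos unfolding E_def by (simp add: field_simps)
    hence "sqrt ((norm (x k - xs))^2) \<le> sqrt (4 * \<xi>1 / L' * r^k)" by (rule real_sqrt_le_mono)
    also have "sqrt (4 * \<xi>1 / L' * r^k) = \<xi>2 * q^k" unfolding \<xi>2_def by (simp only: real_sqrt_mult sqk)
    finally show ?thesis by simp
  qed
  have p3: "norm (d k) \<le> \<xi>3 * q^k" for k
  proof -
    have "\<kappa> * D k \<le> E k" using main[of k] E0[of "Suc k"] by simp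
    hence Dk: "D k \<le> E k / \<kappa>" using kpos by (simp add: field_simps)
    have "(norm (d k))^2 \<le> \<tau> k * D k" using main[of k] by simp
    also have "\<dots> \<le> \<tau>max * D k"
    proof -
      have "\<tau> k * D k \<ge> 0" using main[of k] by (meson order_trans zero_le_power2)
      moreover have "\<tau> k > 0" using tau_bounds[of k] tau_min_pos by linarith
      ultimately have "D k \<ge> 0" by (simp add: zero_le_mult_iff)
      then show ?thesis using tau_bounds[of k] by (intro mult_right_mono) auto
    qed
    also have "\<dots> \<le> \<tau>max * (\<xi>1 * r^k / \<kappa>)"
    proof -
      have "E k / \<kappa> \<le> \<xi>1 * r^k / \<kappa>" using Ek[of k] kpos by (intro divide_right_mono) auto
      with Dk have "D k \<le> \<xi>1 * r^k / \<kappa>" by linarith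
      then show ?thesis using tmax by (intro mult_left_mono) auto
    qed
    finally have "(norm (d k))^2 \<le> \<tau>max * \<xi>1 / \<kappa> * r^k" by simp
    hence "sqrt ((norm (d k))^2) \<le> sqrt (\<tau>max * \<xi>1 / \<kappa> * r^k)" by (rule real_sqrt_le_mono)
    also have "sqrt (\<tau>max * \<xi>1 / \<kappa> * r^k) = \<xi>3 * q^k" unfolding \<xi>3_def by (simp only: real_sqrt_mult sqk)
    finally show ?thesis by simp
  qed
  have pos: "\<xi>2 > 0" "\<xi>3 > 0" unfolding \<xi>2_def \<xi>3_def using x1 L'_pos tmax kpos by auto
  show ?thesis
    apply (rule exI[of _ q], rule exI[of _ \<xi>1], rule exI[of _ \<xi>2], rule exI[of _ \<xi>3])
    using q x1 pos p1 p2 p3 unfolding F_def by auto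
qed

end
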